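(* Let $\mathcal{S}\subset\overline{\mathbb{M}}$ be a finite set. Then there is an integer $e_0$ such that for all $e\ge e_0$, $$\big|\Delta^{(m-1)}_e(\mathcal{S})\setminus\Delta^{(m-1)}_e(\phi(\mathcal{S}))\big|\le\big|\Delta^{(m)}_e(\phi(\mathcal{S}))\setminus\Delta^{(m)}_e(\mathcal{S})\big|.$$
   Context: $q$ is a prime power, $m$ a positive integer. A monomial $\mu\neq1$ in $x_0,\dots,x_m$ written $x_0^{a_0}\cdots x_k^{a_k}$ with $a_k>0$ is projectively reduced if $a_0,\dots,a_{k-1}\le q-1$; $1$ is projectively reduced. $\overline{\mathbb{M}}$ is the set of projectively reduced monomials, $\overline{\mathbb{M}}_e$ those of degree $e$. $\overline{\mathbb{M}}^{(0)}=\{x_0^a:a\ge0\}$, and for $1\le\ell\le m$, $\overline{\mathbb{M}}^{(\ell)}=\{x_0^{a_0}\cdots x_\ell^{a_\ell}\in\overline{\mathbb{M}}:a_\ell>0\}$; $\overline{\mathbb{M}}^{(\ell)}_e=\overline{\mathbb{M}}^{(\ell)}\cap\overline{\mathbb{M}}_e$. For a set $\mathcal{S}$ of monomials, $\Delta_e(\mathcal{S})=\{\mu\in\overline{\mathbb{M}}_e:\text{no }\nu\in\mathcal{S}\text{ divides }\mu\}$ and $\Delta^{(\ell)}_e(\mathcal{S})=\Delta_e(\mathcal{S})\cap\overline{\mathbb{M}}^{(\ell)}_e$. Given $\mathcal{S}\subseteq\overline{\mathbb{M}}$, for $\mu=x_0^{i_0}\cdots x_m^{i_m}\in\mathcal{S}$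 set $\phi(\mu)=\mu x_{m-1}/x_m$ if $x_0^{i_0}\cdots x_{m-2}^{i_{m-2}}x_{m-1}^{i_{m-1}+i_m}\notin\mathcal{S}$ and $i_{m-1}+1<q$, and $\phi(\mu)=\mu$ otherwise; $\phi(\mathcal{S})$ is the image. *)

theory Defs
  imports "HOL-Number_Theory.Prime_Powers"
begin

text \<open>A monomial in x_0,...,x_m is represented by its exponent vector
  a :: nat \<Rightarrow> nat, with a i = 0 for i > m.  The monomial 1 is the zero vector.\<close>

type_synonym monom = "nat \<Rightarrow> nat"

definition monoms :: "nat \<Rightarrow> monom set" where
  "monoms m = {a. \<forall>i>m. a i = 0}"

definition mdeg :: "nat \<Rightarrow> monom \<Rightarrow> nat" where
  "mdeg m a = (\<Sum>i\<le>m. a i)"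

definition mdvd :: "monom \<Rightarrow> monom \<Rightarrow> bool" where
  "mdvd b a \<longleftrightarrow> (\<forall>i. b i \<le> a i)"

definition proj_reduced :: "nat \<Rightarrow> nat \<Rightarrow> monom \<Rightarrow> bool" where
  "proj_reduced q m a \<longleftrightarrow> a \<in> monoms m \<and>
     ((\<forall>i. a i = 0) \<or>
      (\<exists>k\<le>m. a k > 0 \<and> (\<forall>i>k. a i = 0) \<and> (\<forall>i<k. a i \<le> q - 1)))"

definition PR :: "nat \<Rightarrow> nat \<Rightarrow> monom set" where
  "PR q m = {a. proj_reduced q m a}"

definition PR_deg :: "nat \<Rightarrow> nat \<Rightarrow> nat \<Rightarrow> monom set" where
  "PR_deg q m e = {a \<in> PR q m. mdeg m a = e}"

definition PR_level :: "nat \<Rightarrow> nat \<Rightarrow> nat \<Rightarrow> monom set" where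
  "PR_level q m l =
     (if l = 0 then {a \<in> monoms m. \<forall>i>0. a i = 0}
      else {a \<in> PR q m. a l > 0 \<and> (\<forall>i>l. a i = 0)})"

definition Delta :: "nat \<Rightarrow> nat \<Rightarrow> nat \<Rightarrow> monom set \<Rightarrow> monom set" where
  "Delta q m e S = {a \<in> PR_deg q m e. \<forall>b\<in>S. \<not> mdvd b a}"

definition Delta_level :: "nat \<Rightarrow> nat \<Rightarrow> nat \<Rightarrow> nat \<Rightarrow> monom set \<Rightarrow> monom set" where
  "Delta_level q m l e S = Delta q m e S \<inter> PR_level q m l"

definition phi :: "nat \<Rightarrow> nat \<Rightarrow> monom set \<Rightarrow> monom \<Rightarrow> monom" where
  "phi q m S a =
     (if (a(m - 1 := a (m - 1) + a m, m := 0)) \<notin> S \<and> a (m - 1) + 1 < q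
      then a(m - 1 := a (m - 1) + 1, m := a m - 1)
      else a)"

end

theory Submission
  imports Defs "HOL-Library.FuncSet"
begin

lemma finite_deg: "finite {a \<in> monoms m. mdeg m a = e}"
proof -
  have "{a \<in> monoms m. mdeg m a = e} \<subseteq> (\<lambda>g i. if i \<le> m then g i else 0) ` (PiE {..m} (\<lambda>_. {..e}))"
  proof
    fix a assume "a \<in> {a \<in> monoms m. mdeg m a = e}"
    then have a0: "\<forall>i>m. a i = 0" and d: "(\<Sum>i\<le>m. a i) = e" by (auto simp: monoms_def mdeg_def)
    have le: "a i \<le> e" if "i \<le> m" for i
      using d member_le_sum[of i "{..m}" a] that by auto
    have "restrict a {..m} \<in> PiE {..m} (\<lambda>_. {..e})" using le by auto
    moreover have "a = (\<lambda>i. if i \<le> m then restrict a {..m} i else 0)"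
      using a0 by (auto simp: fun_eq_iff not_le)
    ultimately show "a \<in> (\<lambda>g i. if i \<le> m then g i else 0) ` (PiE {..m} (\<lambda>_. {..e}))" by blast
  qed
  thus ?thesis by (rule finite_subset) (auto intro: finite_PiE)
qed

theorem proposition4p10:
  fixes q m :: nat and S :: "monom set"
  assumes "primepow q" and "m \<ge> 1"
    and "S \<subseteq> PR q m" and "finite S"
  shows "\<exists>e0::nat. \<forall>e\<ge>e0.
     card (Delta_level q m (m - 1) e S - Delta_level q m (m - 1) e (phi q m S ` S))
       \<le> card (Delta_level q m m e (phi q m S ` S) - Delta_level q m m e S)"
proof -
  obtain p where mp: "m = Suc p" using assms(2) by (cases m) auto
  have pm: "m - 1 = p" "p \<noteq> m" "m \<noteq> p" "m \<noteq> 0" using mp by auto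
  have Smon: "\<forall>i>m. c i = 0" if "c \<in> S" for c
    using assms(3) that by (auto simp: PR_def proj_reduced_def monoms_def)
  define N where "N = Max (insert 0 (mdeg m ` S))"
  have N: "c i \<le> N" if "c \<in> S" for c i
  proof (cases "i \<le> m")
    case True
    have "c i \<le> mdeg m c" unfolding mdeg_def using member_le_sum[of i "{..m}" c] True by auto
    also have "\<dots> \<le> N" unfolding N_def using assms(4) that by auto
    finally show ?thesis .
  next
    case False then show ?thesis using Smon[OF that] by auto
  qed
  define e0 where "e0 = p * (q - 1) + N + q"
  show ?thesis
  proof (intro exI allI impI)
    fix e assume e: "e0 \<le> e"
    define D1 where "D1 = Delta_level q m (m - 1) e S - Delta_level q m (m - 1) e (phi q m S ` S)"
    define D2 where "D2 = Delta_level q m m e (phi q m S ` S) - Delta_level q m m e S"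
    define A where "A a = {c \<in> S. c m \<ge> 1 \<and> (\<forall>i<p. c i \<le> a i)}" for a :: monom
    define s where "s a = Min ((\<lambda>c. c p) ` A a)" for a
    define f where "f a = a(p := s a, m := a p - s a)" for a
    define g where "g a' = a'(p := a' p + a' m, m := 0)" for a' :: monom
    have key: "f a \<in> D2 \<and> g (f a) = a" if aD: "a \<in> D1" for a
    proof -
      have h1: "\<forall>i>m. a i = 0" and h2: "proj_reduced q m a" and h3: "mdeg m a = e"
        using aD by (auto simp: D1_def Delta_level_def Delta_def PR_deg_def PR_def proj_reduced_def monoms_def)
      have h4: "\<forall>i>p. a i = 0" and h4': "p \<noteq> 0 \<Longrightarrow> a p > 0"
        using aD by (auto simp: D1_def Delta_level_def PR_level_def mp split: if_splits)
      have am: "a m = 0" using h4 mp by auto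
      have h5: "\<forall>c\<in>S. \<not> mdvd c a"
        using aD by (auto simp: D1_def Delta_level_def Delta_def)
      have h6: "\<exists>b\<in>S. mdvd (phi q m S b) a"
        using aD by (auto simp: D1_def Delta_level_def Delta_def)
      have low: "a i \<le> q - 1" if "i < p" for i
      proof -
        have "p \<noteq> 0" using that by auto
        with h4' have ap: "a p > 0" by auto
        from h2 obtain k where k: "k \<le> m" "a k > 0" "\<forall>i>k. a i = 0" "\<forall>i<k. a i \<le> q - 1"
          using ap unfolding proj_reduced_def by (metis less_not_refl)
        have "k \<le> p" using k(2) h4 by (metis not_le less_not_refl)
        moreover have "\<not> p > k" using k(3) ap by auto
        ultimately have "k = p" by auto
        thus ?thesis using k(4) that by auto
      qed
      have "(\<Sum>i<p. a i) \<le> p * (q - 1)"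
        using sum_bounded_above[of "{..<p}" a "q - 1"] low by auto
      moreover have "e = (\<Sum>i<p. a i) + a p"
        using h3 am unfolding mdeg_def mp by (simp add: lessThan_Suc_atMost[symmetric])
      ultimately have apbig: "a p \<ge> N + q" using e unfolding e0_def by linarith
      from h6 obtain b where bS: "b \<in> S" and bd: "mdvd (phi q m S b) a" by blast
      have bprops: "b m = 1 \<and> b p + 1 < q \<and> (\<forall>i<p. b i \<le> a i)"
      proof (cases "b(p := b p + b m, m := 0) \<notin> S \<and> b p + 1 < q")
        case True
        then have ph: "phi q m S b = b(p := b p + 1, m := b m - 1)"
          unfolding phi_def pm by simp
        have "b m - 1 \<le> a m" using bd unfolding ph mdvd_def by (metis fun_upd_same)
        then have "b m \<le> 1" using am by auto
        moreover have "b m \<noteq> 0"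
        proof
          assume "b m = 0"
          then have "b(p := b p + b m, m := 0) = b" by (auto simp: fun_eq_iff)
          then show False using True bS by simp
        qed
        moreover have "\<forall>i<p. b i \<le> a i"
        proof (intro allI impI)
          fix i assume "i < p"
          then have "i \<noteq> p" "i \<noteq> m" using mp by auto
          then show "b i \<le> a i" using bd unfolding ph mdvd_def by (metis fun_upd_other)
        qed
        ultimately show ?thesis using True by auto
      next
        case False
        then have "phi q m S b = b" unfolding phi_def pm by auto
        then show ?thesis using bd h5 bS by auto
      qed
      have bA: "b \<in> A a" using bprops bS unfolding A_def by auto
      have finA: "finite (A a)" using assms(4) unfolding A_def by auto
      have sle: "s a \<le> c p" if "c \<in> A a" for c
        unfolding s_def using finA that by auto
      obtain cs where csA: "cs \<in> A a" and css: "cs p = s a"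
      proof -
        have "s a \<in> (\<lambda>c. c p) ` A a" unfolding s_def using finA bA by (intro Min_in) auto
        then show ?thesis using that by auto
      qed
      have sb: "s a \<le> b p" using sle bA by auto
      have sq: "s a + 2 \<le> q" using sb bprops by auto
      have fa: "f a p = s a" "f a m = a p - s a" "\<And>i. i \<noteq> p \<Longrightarrow> i \<noteq> m \<Longrightarrow> f a i = a i"
        unfolding f_def using pm by auto
      have fmon: "f a \<in> monoms m" unfolding monoms_def using fa h1 pm by auto
      have fm0: "\<forall>i>m. f a i = 0" using fmon unfolding monoms_def by auto
      have fmpos: "f a m > 0" using fa apbig sq by auto
      have fPR: "f a \<in> PR q m"
        unfolding PR_def proj_reduced_def
      proof (intro CollectI conjI disjI2 fmon exI[of _ m])
        show "\<forall>i<m. f a i \<le> q - 1"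
        proof (intro allI impI)
          fix i assume "i < m"
          then consider "i < p" | "i = p" using mp by linarith
          then show "f a i \<le> q - 1"
          proof cases
            case 1 then show ?thesis using fa(3)[of i] low pm by auto
          next
            case 2 then show ?thesis using fa sq by auto
          qed
        qed
      qed (use fmpos fm0 in auto)
      have fdeg: "mdeg m (f a) = e"
      proof -
        have "(\<Sum>i<p. f a i) = (\<Sum>i<p. a i)"
          by (rule sum.cong) (use fa(3) mp in auto)
        moreover have "e = (\<Sum>i<p. a i) + a p"
          using h3 am unfolding mdeg_def mp by (simp add: lessThan_Suc_atMost[symmetric])
        moreover have "mdeg m (f a) = (\<Sum>i<p. f a i) + f a p + f a m"
          unfolding mdeg_def mp by (simp add: lessThan_Suc_atMost[symmetric])
        ultimately show ?thesis using fa apbig sq mp by auto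
      qed
      have nophi: "\<not> mdvd (phi q m S c) (f a)" if cS: "c \<in> S" for c
      proof
        assume cd: "mdvd (phi q m S c) (f a)"
        show False
        proof (cases "c(p := c p + c m, m := 0) \<notin> S \<and> c p + 1 < q")
          case True
          then have ph: "phi q m S c = c(p := c p + 1, m := c m - 1)"
            unfolding phi_def pm by simp
          have "c p + 1 \<le> f a p" using cd unfolding ph mdvd_def using pm
            by (metis fun_upd_same fun_upd_other)
          then have c1: "c p + 1 \<le> s a" using fa by simp
          have c2: "\<forall>i<p. c i \<le> a i"
          proof (intro allI impI)
            fix i assume "i < p"
            then have "i \<noteq> p" "i \<noteq> m" using mp by auto
            then show "c i \<le> a i" using cd fa(3)[of i] unfolding ph mdvd_def by (metis fun_upd_other)
          qed
          show False
          proof (cases "c m = 0")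
            case True
            then have "c(p := c p + c m, m := 0) = c" by (auto simp: fun_eq_iff)
            then show False using \<open>c(p := c p + c m, m := 0) \<notin> S \<and> c p + 1 < q\<close> cS by simp
          next
            case False
            then have "c \<in> A a" using cS c2 unfolding A_def by auto
            then show False using sle c1 by fastforce
          qed
        next
          case False
          then have ph: "phi q m S c = c" unfolding phi_def pm by auto
          have cd': "c i \<le> f a i" for i using cd unfolding ph mdvd_def by auto
          have c2: "\<forall>i<p. c i \<le> a i"
          proof (intro allI impI)
            fix i assume "i < p"
            then have "i \<noteq> p" "i \<noteq> m" using mp by auto
            then show "c i \<le> a i" using cd'[of i] fa(3)[of i] by simp
          qed
          have cp: "c p \<le> s a" using cd'[of p] fa by simp
          show False
          proof (cases "c m = 0")
            case True
            have "mdvd c a" unfolding mdvd_def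
            proof
              fix i
              consider "i < p" | "i = p" | "i = m" | "i > m" using mp by linarith
              then show "c i \<le> a i"
              proof cases
                case 1 then show ?thesis using c2 by auto
              next
                case 2 then show ?thesis using cp apbig sq by auto
              qed (use True Smon[OF cS] in auto)
            qed
            then show False using h5 cS by auto
          next
            case cm: False
            then have "c \<in> A a" using cS c2 unfolding A_def by auto
            then have "c p = s a" using sle cp by fastforce
            then have cin: "c(p := c p + c m, m := 0) \<in> S" using False sq by auto
            have "mdvd (c(p := c p + c m, m := 0)) a" unfolding mdvd_def
            proof
              fix i
              consider "i < p" | "i = p" | "i = m" | "i > m" using mp by linarith
              then show "(c(p := c p + c m, m := 0)) i \<le> a i"
              proof cases
                case 1 then show ?thesis using c2 pm by auto
              next
                case 2 then show ?thesis using \<open>c p = s a\<close> N[OF cS, of m] apbig sq pm by auto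
              next
                case 3 then show ?thesis by auto
              next
                case 4 then show ?thesis using Smon[OF cS] pm mp by auto
              qed
            qed
            then show False using h5 cin by auto
          qed
        qed
      qed
      have csS: "cs \<in> S" and csl: "\<forall>i<p. cs i \<le> a i" using csA unfolding A_def by auto
      have csd: "mdvd cs (f a)" unfolding mdvd_def
      proof
        fix i
        consider "i < p" | "i = p" | "i = m" | "i > m" using mp by linarith
        then show "cs i \<le> f a i"
        proof cases
          case 1 then show ?thesis using csl fa(3)[of i] mp by auto
        next
          case 2 then show ?thesis using css fa by auto
        next
          case 3 then show ?thesis using N[OF csS, of m] fa apbig sq by auto
        next
          case 4 then show ?thesis using Smon[OF csS] by auto
        qed
      qed
      have "f a \<in> D2"
        unfolding D2_def Delta_level_def Delta_def PR_deg_def PR_level_def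
        using fPR fdeg nophi fmpos fm0 csd csS pm by auto
      moreover have "g (f a) = a"
        unfolding g_def using fa sb apbig sq am pm by (auto simp: fun_eq_iff)
      ultimately show ?thesis by auto
    qed
    have "inj_on f D1" by (rule inj_on_inverseI[of _ g]) (use key in auto)
    moreover have "f ` D1 \<subseteq> D2" using key by auto
    moreover have "finite D2"
      by (rule finite_subset[OF _ finite_deg[of m e]])
        (auto simp: D2_def Delta_level_def Delta_def PR_deg_def PR_def proj_reduced_def)
    ultimately have "card D1 \<le> card D2" by (rule card_inj_on_le)
    then show "card (Delta_level q m (m - 1) e S - Delta_level q m (m - 1) e (phi q m S ` S))
       \<le> card (Delta_level q m m e (phi q m S ` S) - Delta_level q m m e S)"
      unfolding D1_def D2_def .
  qed
qed

end
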